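(* Let $G$ be an infinite abelian group and $(a_n)_{n\in\omega}$ a $T$-sequence in $G$. Then the coarse space $(G,\mathcal{S}_{\tau(a_n)})$ is metrizable if and only if $G$ is countable.
   Context: A sequence $(a_n)$ in an abelian group $G$ is a $T$-sequence if there is a Hausdorff group topology on $G$ in which $(a_n)\to0$; $\tau(a_n)$ is the strongest group topology on $G$ in which $(a_n)\to0$. $\mathcal{S}_{\tau}$ is the smallest group ideal on $G$ containing every set $\{x\}\cup\{x_n:n\in\omega\}$ with $x_n\to x$ in $(G,\tau)$; a group ideal (family of subsets containing all finite sets, closed under subsets and under $(A,B)\mapsto A-B$) defines the coarse structure on $G$ with base $\{\{(x,y):x\in A+y\}:A\in\mathcal{I}\}$. A coarse space is metrizable iff its coarse structure has a countable base (a subfamily such that every entourage is contained in a member of it). *)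

theory Defs
  imports "HOL-Analysis.Analysis"
begin

definition group_topology :: "'a::ab_group_add topology \<Rightarrow> bool" where
  "group_topology T \<longleftrightarrow> topspace T = UNIV \<and>
     continuous_map (prod_topology T T) T (\<lambda>(x, y). x + y) \<and>
     continuous_map T T uminus"

definition T_sequence :: "(nat \<Rightarrow> 'a::ab_group_add) \<Rightarrow> bool" where
  "T_sequence a \<longleftrightarrow> (\<exists>T. group_topology T \<and> Hausdorff_space T \<and> limitin T a 0 sequentially)"

definition tau_seq :: "(nat \<Rightarrow> 'a::ab_group_add) \<Rightarrow> 'a topology" where
  "tau_seq a = (THE T. group_topology T \<and> limitin T a 0 sequentially \<and>
      (\<forall>T'. group_topology T' \<and> limitin T' a 0 sequentially \<longrightarrow>
             (\<forall>U. openin T' U \<longrightarrow> openin T U)))"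

definition set_diff_grp :: "'a::ab_group_add set \<Rightarrow> 'a set \<Rightarrow> 'a set" where
  "set_diff_grp A B = {a - b | a b. a \<in> A \<and> b \<in> B}"

definition group_ideal :: "'a::ab_group_add set set \<Rightarrow> bool" where
  "group_ideal I \<longleftrightarrow> (\<forall>F. finite F \<longrightarrow> F \<in> I) \<and>
     (\<forall>A B. A \<in> I \<and> B \<subseteq> A \<longrightarrow> B \<in> I) \<and>
     (\<forall>A B. A \<in> I \<and> B \<in> I \<longrightarrow> set_diff_grp A B \<in> I)"

definition S_ideal :: "'a::ab_group_add topology \<Rightarrow> 'a set set" where
  "S_ideal T = \<Inter> {I. group_ideal I \<and>
      (\<forall>x xs. limitin T xs x sequentially \<longrightarrow> insert x (range xs) \<in> I)}"

definition ideal_entourage :: "'a::ab_group_add set \<Rightarrow> ('a \<times> 'a) set" where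
  "ideal_entourage A = {(x, y). x \<in> (\<lambda>a. a + y) ` A}"

definition ideal_coarse_structure :: "'a::ab_group_add set set \<Rightarrow> ('a \<times> 'a) set set" where
  "ideal_coarse_structure I = {E. \<exists>A\<in>I. E \<subseteq> ideal_entourage A}"

text \<open>A coarse structure is metrizable iff it has a countable base.\<close>
definition coarse_metrizable :: "('a \<times> 'a) set set \<Rightarrow> bool" where
  "coarse_metrizable \<E> \<longleftrightarrow> (\<exists>\<B>. countable \<B> \<and> \<B> \<subseteq> \<E> \<and>
      (\<forall>E\<in>\<E>. \<exists>F\<in>\<B>. E \<subseteq> F))"

end

theory Submission
  imports Defs
begin

definition splus :: "'a::ab_group_add set \<Rightarrow> 'a set \<Rightarrow> 'a set" where
  "splus X Y = {x + y | x y. x \<in> X \<and> y \<in> Y}"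

definition Aset :: "(nat \<Rightarrow> 'a::ab_group_add) \<Rightarrow> nat \<Rightarrow> 'a set" where
  "Aset a m = insert 0 ((\<lambda>n. a n) ` {m..} \<union> (\<lambda>n. - a n) ` {m..})"

definition Uset :: "(nat \<Rightarrow> 'a::ab_group_add) \<Rightarrow> (nat \<Rightarrow> nat) \<Rightarrow> 'a set" where
  "Uset a ms = {x. \<exists>(k::nat) (f::nat\<Rightarrow>'a). (\<forall>i. f i \<in> Aset a (ms i)) \<and> x = (\<Sum>i<k. f i)}"

definition Uopen :: "(nat \<Rightarrow> 'a::ab_group_add) \<Rightarrow> 'a set \<Rightarrow> bool" where
  "Uopen a W \<longleftrightarrow> (\<forall>x\<in>W. \<exists>ms. \<forall>u\<in>Uset a ms. x + u \<in> W)"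

definition Utop :: "(nat \<Rightarrow> 'a::ab_group_add) \<Rightarrow> 'a topology" where
  "Utop a = topology (Uopen a)"

lemma Aset_0[simp]: "0 \<in> Aset a m" by (simp add: Aset_def)

lemma Aset_mono: "m \<le> m' \<Longrightarrow> Aset a m' \<subseteq> Aset a m"
  unfolding Aset_def by auto

lemma Aset_neg: "x \<in> Aset a m \<Longrightarrow> - x \<in> Aset a m"
  unfolding Aset_def by auto

lemma Aset_a: "m \<le> n \<Longrightarrow> a n \<in> Aset a m"
  unfolding Aset_def by auto

lemma Uset_0[simp]: "0 \<in> Uset a ms"
  unfolding Uset_def by (rule CollectI, rule exI[of _ 0], rule exI[of _ "\<lambda>_. 0"]) simp

lemma Uset_mono: "(\<And>i. ms i \<le> ms' i) \<Longrightarrow> Uset a ms' \<subseteq> Uset a ms"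
  unfolding Uset_def using Aset_mono by blast

lemma Uset_neg: "x \<in> Uset a ms \<Longrightarrow> - x \<in> Uset a ms"
proof -
  assume "x \<in> Uset a ms"
  then obtain k f where f: "\<forall>i. f i \<in> Aset a (ms i)" "x = (\<Sum>i<k. f i)" unfolding Uset_def by blast
  have "\<forall>i. - f i \<in> Aset a (ms i)" using f Aset_neg by blast
  moreover have "- x = (\<Sum>i<k. - f i)" using f by (simp add: sum_negf)
  ultimately show ?thesis unfolding Uset_def by (intro CollectI exI[of _ k] exI[of _ "\<lambda>i. - f i"]) simp
qed

lemma Aset_Uset: "n \<ge> ms 0 \<Longrightarrow> a n \<in> Uset a ms"
proof -
  assume n: "n \<ge> ms 0"
  define f where "f = (\<lambda>i::nat. if i = 0 then a n else 0)"
  have "\<forall>i. f i \<in> Aset a (ms i)" using Aset_a[OF n] by (simp add: f_def)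
  moreover have "a n = (\<Sum>i<1. f i)" by (simp add: f_def)
  ultimately show ?thesis unfolding Uset_def by blast
qed

lemma sum_cut: "j \<le> (n::nat) \<Longrightarrow> (\<Sum>i<n. if i < j then f i else 0) = (\<Sum>i<j. f i)"
proof (induction n)
  case 0 then show ?case by simp
next
  case (Suc n) then show ?case by (cases "j = Suc n") auto
qed

lemma sum_interleave: "(\<Sum>i<2*(n::nat). h i) = (\<Sum>i<n. h (2*i) + h (2*i+1))"
  by (induction n) (simp_all add: algebra_simps)

lemma Uset_half: "\<exists>ms'. \<forall>u\<in>Uset a ms'. \<forall>v\<in>Uset a ms'. u + v \<in> Uset a ms"
proof (intro exI ballI)
  define ms' where "ms' = (\<lambda>i. max (ms (2*i)) (ms (2*i+1)))"
  fix u v assume u: "u \<in> Uset a ms'" and v: "v \<in> Uset a ms'"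
  obtain j f where f: "\<forall>i. f i \<in> Aset a (ms' i)" "u = (\<Sum>i<j. f i)" using u unfolding Uset_def by blast
  obtain l g where g: "\<forall>i. g i \<in> Aset a (ms' i)" "v = (\<Sum>i<l. g i)" using v unfolding Uset_def by blast
  define n where "n = max j l"
  define f' where "f' = (\<lambda>i. if i < j then f i else 0)"
  define g' where "g' = (\<lambda>i. if i < l then g i else 0)"
  define h where "h = (\<lambda>i. if even i then f' (i div 2) else g' (i div 2))"
  have "\<forall>i. h i \<in> Aset a (ms i)"
  proof
    fix i
    show "h i \<in> Aset a (ms i)"
    proof (cases "even i")
      case True
      then obtain q where q: "i = 2*q" by blast
      have "f q \<in> Aset a (ms i)" using f(1) Aset_mono[of "ms i" "ms' q" a] q by (auto simp: ms'_def)
      then show ?thesis using True q by (simp add: h_def f'_def)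
    next
      case False
      then obtain q where q: "i = 2*q+1" using oddE by blast
      have "g q \<in> Aset a (ms i)" using g(1) Aset_mono[of "ms i" "ms' q" a] q by (auto simp: ms'_def)
      then show ?thesis using False q by (simp add: h_def g'_def)
    qed
  qed
  moreover have "u + v = (\<Sum>i<2*n. h i)"
  proof -
    have "(\<Sum>i<2*n. h i) = (\<Sum>i<n. f' i + g' i)" unfolding sum_interleave by (simp add: h_def)
    also have "\<dots> = (\<Sum>i<n. f' i) + (\<Sum>i<n. g' i)" by (simp add: sum.distrib)
    also have "\<dots> = u + v" unfolding f'_def g'_def using sum_cut[of j n f] sum_cut[of l n g] f g
      by (simp add: n_def)
    finally show ?thesis by simp
  qed
  ultimately show "u + v \<in> Uset a ms" unfolding Uset_def by blast
qed

lemma istopology_Uopen: "istopology (Uopen a)"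
  unfolding istopology_def
proof (intro conjI allI impI)
  fix S T assume S: "Uopen a S" and T: "Uopen a T"
  show "Uopen a (S \<inter> T)" unfolding Uopen_def
  proof
    fix x assume x: "x \<in> S \<inter> T"
    obtain ms1 where 1: "\<forall>u\<in>Uset a ms1. x + u \<in> S" using S x unfolding Uopen_def by blast
    obtain ms2 where 2: "\<forall>u\<in>Uset a ms2. x + u \<in> T" using T x unfolding Uopen_def by blast
    have "Uset a (\<lambda>i. max (ms1 i) (ms2 i)) \<subseteq> Uset a ms1"
      by (rule Uset_mono) simp
    moreover have "Uset a (\<lambda>i. max (ms1 i) (ms2 i)) \<subseteq> Uset a ms2"
      by (rule Uset_mono) simp
    ultimately show "\<exists>ms. \<forall>u\<in>Uset a ms. x + u \<in> S \<inter> T" using 1 2 by blast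
  qed
next
  fix K assume K: "\<forall>S\<in>K. Uopen a S"
  show "Uopen a (\<Union>K)" unfolding Uopen_def
  proof
    fix x assume "x \<in> \<Union>K"
    then obtain S where S: "S \<in> K" "x \<in> S" by blast
    then obtain ms where "\<forall>u\<in>Uset a ms. x + u \<in> S" using K unfolding Uopen_def by blast
    then have "\<forall>u\<in>Uset a ms. x + u \<in> \<Union>K" using S(1) by blast
    then show "\<exists>ms. \<forall>u\<in>Uset a ms. x + u \<in> \<Union>K" by blast
  qed
qed

lemma openin_Utop: "openin (Utop a) = Uopen a"
  unfolding Utop_def by (rule topology_inverse'[OF istopology_Uopen])

lemma topspace_Utop[simp]: "topspace (Utop a) = UNIV"
proof -
  have "Uopen a UNIV" unfolding Uopen_def by simp
  then have "openin (Utop a) UNIV" by (simp add: openin_Utop)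
  then show ?thesis using openin_subset by blast
qed

lemma Uopen_translate: "Uopen a W \<Longrightarrow> Uopen a {z. z + c \<in> W}"
  unfolding Uopen_def
proof
  fix x assume W: "\<forall>x\<in>W. \<exists>ms. \<forall>u\<in>Uset a ms. x + u \<in> W" and x: "x \<in> {z. z + c \<in> W}"
  then obtain ms where "\<forall>u\<in>Uset a ms. x + c + u \<in> W" by blast
  then have "\<forall>u\<in>Uset a ms. x + u \<in> {z. z + c \<in> W}" by (simp add: algebra_simps)
  then show "\<exists>ms. \<forall>u\<in>Uset a ms. x + u \<in> {z. z + c \<in> W}" by blast
qed

lemma Uset_nhd: "\<exists>Ob. Uopen a Ob \<and> 0 \<in> Ob \<and> Ob \<subseteq> Uset a ms"
proof (intro exI conjI)
  let ?Ob = "{z. \<exists>ms'. \<forall>u\<in>Uset a ms'. z + u \<in> Uset a ms}"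
  have "\<forall>u\<in>Uset a ms. 0 + u \<in> Uset a ms" by simp
  then show "0 \<in> ?Ob" by blast
  show "?Ob \<subseteq> Uset a ms"
  proof
    fix z assume "z \<in> ?Ob"
    then obtain ms' where "\<forall>u\<in>Uset a ms'. z + u \<in> Uset a ms" by blast
    then have "z + 0 \<in> Uset a ms" using Uset_0 by blast
    then show "z \<in> Uset a ms" by simp
  qed
  show "Uopen a ?Ob" unfolding Uopen_def
  proof
    fix x assume "x \<in> ?Ob"
    then obtain ms' where ms': "\<forall>u\<in>Uset a ms'. x + u \<in> Uset a ms" by blast
    obtain ms'' where ms'': "\<forall>u\<in>Uset a ms''. \<forall>v\<in>Uset a ms''. u + v \<in> Uset a ms'"
      using Uset_half by blast
    have "\<forall>u\<in>Uset a ms''. x + u \<in> ?Ob"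
    proof
      fix u assume u: "u \<in> Uset a ms''"
      have "\<forall>v\<in>Uset a ms''. x + u + v \<in> Uset a ms"
        proof
        fix v assume v: "v \<in> Uset a ms''"
        have "u + v \<in> Uset a ms'" using ms'' u v by blast
        then have "x + (u + v) \<in> Uset a ms" using ms' by blast
        then show "x + u + v \<in> Uset a ms" by (simp add: add.assoc)
      qed
      then show "x + u \<in> ?Ob" by blast
    qed
    then show "\<exists>ms. \<forall>u\<in>Uset a ms. x + u \<in> ?Ob" by blast
  qed
qed

lemma Utop_lim: "limitin (Utop a) a 0 sequentially"
  unfolding limitin_sequentially openin_Utop
proof (intro conjI allI impI)
  fix W assume "Uopen a W \<and> 0 \<in> W"
  then obtain ms where "\<forall>u\<in>Uset a ms. 0 + u \<in> W" unfolding Uopen_def by blast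
  moreover have "\<forall>n\<ge>ms 0. a n \<in> Uset a ms" using Aset_Uset by blast
  ultimately have "\<forall>n\<ge>ms 0. a n \<in> W" by simp
  then show "\<exists>N. \<forall>n\<ge>N. a n \<in> W" by blast
qed simp

lemma Utop_group: "group_topology (Utop a)"
  unfolding group_topology_def
proof (intro conjI)
  show "topspace (Utop a) = UNIV" by simp
  show "continuous_map (Utop a) (Utop a) uminus"
    unfolding continuous_map openin_Utop
  proof (intro conjI allI impI)
    fix W assume W: "Uopen a W"
    show "Uopen a {x \<in> topspace (Utop a). - x \<in> W}" unfolding Uopen_def
    proof
      fix x assume "x \<in> {x \<in> topspace (Utop a). - x \<in> W}"
      then obtain ms where "\<forall>u\<in>Uset a ms. - x + u \<in> W" using W unfolding Uopen_def by blast
      have "\<forall>u\<in>Uset a ms. x + u \<in> {x \<in> topspace (Utop a). - x \<in> W}"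
      proof
        fix u assume "u \<in> Uset a ms"
        then have "- x + - u \<in> W" using \<open>\<forall>u\<in>Uset a ms. - x + u \<in> W\<close> Uset_neg by blast
        then show "x + u \<in> {x \<in> topspace (Utop a). - x \<in> W}" by (simp add: algebra_simps)
      qed
      then show "\<exists>ms. \<forall>u\<in>Uset a ms. x + u \<in> {x \<in> topspace (Utop a). - x \<in> W}" by blast
    qed
  qed simp
  show "continuous_map (prod_topology (Utop a) (Utop a)) (Utop a) (\<lambda>(x, y). x + y)"
    unfolding continuous_map
  proof (intro conjI allI impI)
    fix W assume W: "openin (Utop a) W"
    show "openin (prod_topology (Utop a) (Utop a))
          {x \<in> topspace (prod_topology (Utop a) (Utop a)). (case x of (x, y) \<Rightarrow> x + y) \<in> W}"
      unfolding openin_prod_topology_alt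
    proof (intro allI impI)
      fix x y assume "(x, y) \<in> {x \<in> topspace (prod_topology (Utop a) (Utop a)). (case x of (x, y) \<Rightarrow> x + y) \<in> W}"
      then have xy: "x + y \<in> W" by simp
      obtain ms where ms: "\<forall>u\<in>Uset a ms. x + y + u \<in> W" using W xy unfolding openin_Utop Uopen_def by blast
      obtain ms' where ms': "\<forall>u\<in>Uset a ms'. \<forall>v\<in>Uset a ms'. u + v \<in> Uset a ms"
        using Uset_half by blast
      obtain Ob where Ob: "Uopen a Ob" "0 \<in> Ob" "Ob \<subseteq> Uset a ms'" using Uset_nhd by blast
      let ?X = "{z. z + - x \<in> Ob}" and ?Y = "{z. z + - y \<in> Ob}"
      have "openin (Utop a) ?X" "openin (Utop a) ?Y" using Uopen_translate Ob(1) unfolding openin_Utop by blast+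
      moreover have "x \<in> ?X" "y \<in> ?Y" using Ob(2) by simp_all
      moreover have "?X \<times> ?Y \<subseteq> {x \<in> topspace (prod_topology (Utop a) (Utop a)). (case x of (x, y) \<Rightarrow> x + y) \<in> W}"
      proof
        fix z assume "z \<in> ?X \<times> ?Y"
        then obtain p q where z: "z = (p, q)" and p: "p + - x \<in> Ob" and q: "q + - y \<in> Ob" by blast
        have "(p + - x) + (q + - y) \<in> Uset a ms" using ms' Ob(3) p q by blast
        then have "x + y + ((p + - x) + (q + - y)) \<in> W" using ms by blast
        then have "p + q \<in> W" by (simp add: algebra_simps)
        then show "z \<in> {x \<in> topspace (prod_topology (Utop a) (Utop a)). (case x of (x, y) \<Rightarrow> x + y) \<in> W}"
          using z by simp
      qed
      ultimately show "\<exists>U V. openin (Utop a) U \<and> openin (Utop a) V \<and> x \<in> U \<and> y \<in> V \<and> U \<times> V \<subseteq>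
          {x \<in> topspace (prod_topology (Utop a) (Utop a)). (case x of (x, y) \<Rightarrow> x + y) \<in> W}"
        by blast
    qed
  qed simp
qed

lemma gt_topspace: "group_topology T \<Longrightarrow> topspace T = UNIV"
  unfolding group_topology_def by blast

lemma gt_add_open:
  assumes G: "group_topology T" and V: "openin T V"
  shows "openin (prod_topology T T) {(p, q). p + q \<in> V}"
proof -
  have "continuous_map (prod_topology T T) T (\<lambda>(x, y). x + y)" using G unfolding group_topology_def by blast
  then have "openin (prod_topology T T) {z \<in> topspace (prod_topology T T). (case z of (x, y) \<Rightarrow> x + y) \<in> V}"
    using V unfolding continuous_map by blast
  moreover have "{z \<in> topspace (prod_topology T T). (case z of (x, y) \<Rightarrow> x + y) \<in> V} = {(p, q). p + q \<in> V}"
    using gt_topspace[OF G] by auto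
  ultimately show ?thesis by simp
qed

lemma gt_half:
  assumes G: "group_topology T" and V: "openin T V" and V0: "0 \<in> V"
  shows "\<exists>V'. openin T V' \<and> 0 \<in> V' \<and> (\<forall>p\<in>V'. \<forall>q\<in>V'. p + q \<in> V)"
proof -
  have "(0, 0) \<in> {(p, q). p + q \<in> V}" using V0 by simp
  then obtain U1 U2 where U: "openin T U1" "openin T U2" "0 \<in> U1" "0 \<in> U2" "U1 \<times> U2 \<subseteq> {(p, q). p + q \<in> V}"
    using gt_add_open[OF G V] unfolding openin_prod_topology_alt by metis
  show ?thesis
  proof (intro exI conjI ballI)
    show "openin T (U1 \<inter> U2)" using U by blast
    show "0 \<in> U1 \<inter> U2" using U by blast
    fix p q assume "p \<in> U1 \<inter> U2" "q \<in> U1 \<inter> U2"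
    then have "(p, q) \<in> U1 \<times> U2" by blast
    then show "p + q \<in> V" using U(5) by blast
  qed
qed

lemma gt_translate:
  assumes G: "group_topology T" and W: "openin T W"
  shows "openin T {z. x + z \<in> W}"
proof (subst openin_subopen, intro ballI)
  fix z assume "z \<in> {z. x + z \<in> W}"
  then have "(x, z) \<in> {(p, q). p + q \<in> W}" by simp
  then obtain U1 U2 where U: "openin T U1" "openin T U2" "x \<in> U1" "z \<in> U2" "U1 \<times> U2 \<subseteq> {(p, q). p + q \<in> W}"
    using gt_add_open[OF G W] unfolding openin_prod_topology_alt by metis
  have "U2 \<subseteq> {z. x + z \<in> W}"
  proof
    fix q assume "q \<in> U2"
    then have "(x, q) \<in> U1 \<times> U2" using U(3) by blast
    then show "q \<in> {z. x + z \<in> W}" using U(5) by blast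
  qed
  then show "\<exists>T'. openin T T' \<and> z \<in> T' \<and> T' \<subseteq> {z. x + z \<in> W}" using U by blast
qed

lemma gt_neg_lim:
  assumes G: "group_topology T" and lim: "limitin T a 0 sequentially"
  shows "limitin T (\<lambda>n. - a n) 0 sequentially"
proof -
  have "continuous_map T T uminus" using G unfolding group_topology_def by blast
  from continuous_map_limit[OF this lim] show ?thesis by (simp add: comp_def)
qed

lemma Uset_inside:
  assumes G: "group_topology T" and lim: "limitin T a 0 sequentially"
    and V: "openin T V" and V0: "0 \<in> V"
  shows "\<exists>ms. Uset a ms \<subseteq> V"
proof -
  define hf where "hf = (\<lambda>V. SOME V'. openin T V' \<and> 0 \<in> V' \<and> (\<forall>p\<in>V'. \<forall>q\<in>V'. p + q \<in> V))"
  define Vs where "Vs = rec_nat V (\<lambda>_ X. hf X)"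
  have Vs0: "Vs 0 = V" and VsS: "\<And>k. Vs (Suc k) = hf (Vs k)" by (simp_all add: Vs_def)
  have P: "openin T (Vs k) \<and> 0 \<in> Vs k" for k
  proof (induction k)
    case 0 then show ?case using V V0 Vs0 by simp
  next
    case (Suc k)
    then have "\<exists>V'. openin T V' \<and> 0 \<in> V' \<and> (\<forall>p\<in>V'. \<forall>q\<in>V'. p + q \<in> Vs k)"
      using gt_half[OF G] by blast
    then have "openin T (hf (Vs k)) \<and> 0 \<in> hf (Vs k) \<and> (\<forall>p\<in>hf (Vs k). \<forall>q\<in>hf (Vs k). p + q \<in> Vs k)"
      unfolding hf_def by (rule someI_ex)
    then show ?case using VsS by simp
  qed
  have H: "\<forall>p\<in>Vs (Suc k). \<forall>q\<in>Vs (Suc k). p + q \<in> Vs k" for k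
  proof -
    have "\<exists>V'. openin T V' \<and> 0 \<in> V' \<and> (\<forall>p\<in>V'. \<forall>q\<in>V'. p + q \<in> Vs k)"
      using gt_half[OF G] P by blast
    then have "openin T (hf (Vs k)) \<and> 0 \<in> hf (Vs k) \<and> (\<forall>p\<in>hf (Vs k). \<forall>q\<in>hf (Vs k). p + q \<in> Vs k)"
      unfolding hf_def by (rule someI_ex)
    then show ?thesis using VsS by simp
  qed
  have neg: "limitin T (\<lambda>n. - a n) 0 sequentially" using gt_neg_lim[OF G lim] .
  have E: "\<exists>m. \<forall>n\<ge>m. a n \<in> Vs (Suc k) \<and> - a n \<in> Vs (Suc k)" for k
  proof -
    obtain N1 where N1: "\<forall>n\<ge>N1. a n \<in> Vs (Suc k)" using lim P[of "Suc k"] unfolding limitin_sequentially by blast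
    obtain N2 where N2: "\<forall>n\<ge>N2. - a n \<in> Vs (Suc k)" using neg P[of "Suc k"] unfolding limitin_sequentially by blast
    show ?thesis using N1 N2 by (intro exI[of _ "max N1 N2"]) simp
  qed
  define ms where "ms = (\<lambda>k. SOME m. \<forall>n\<ge>m. a n \<in> Vs (Suc k) \<and> - a n \<in> Vs (Suc k))"
  have AV: "Aset a (ms k) \<subseteq> Vs (Suc k)" for k
  proof -
    have "\<forall>n\<ge>ms k. a n \<in> Vs (Suc k) \<and> - a n \<in> Vs (Suc k)" unfolding ms_def by (rule someI_ex[OF E])
    then show ?thesis using P[of "Suc k"] unfolding Aset_def by auto
  qed
  have S: "\<forall>j f. (\<forall>i. f i \<in> Vs (i + j + 1)) \<longrightarrow> (\<Sum>i<k. f i) \<in> Vs j" for k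
  proof (induction k)
    case 0 then show ?case using P by simp
  next
    case (Suc k)
    show ?case
    proof (intro allI impI)
      fix j and f :: "nat \<Rightarrow> 'a" assume f: "\<forall>i. f i \<in> Vs (i + j + 1)"
      have "\<forall>i. f (Suc i) \<in> Vs (i + Suc j + 1)" using f by (metis add_Suc add_Suc_right)
      then have "(\<Sum>i<k. f (Suc i)) \<in> Vs (Suc j)"
        using Suc.IH[THEN spec[of _ "Suc j"], THEN spec[of _ "\<lambda>i. f (Suc i)"]] by simp
      moreover have "f 0 \<in> Vs (Suc j)" using f by (metis add_0 Suc_eq_plus1)
      ultimately have "f 0 + (\<Sum>i<k. f (Suc i)) \<in> Vs j" using H by blast
      then show "(\<Sum>i<Suc k. f i) \<in> Vs j" by (simp only: sum.lessThan_Suc_shift)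
    qed
  qed
  have "Uset a ms \<subseteq> V"
  proof
    fix u assume "u \<in> Uset a ms"
    then obtain k f where f: "\<forall>i. f i \<in> Aset a (ms i)" "u = (\<Sum>i<k. f i)" unfolding Uset_def by blast
    have "\<forall>i. f i \<in> Vs (i + 0 + 1)" using f(1) AV by auto
    then have "u \<in> Vs 0" using S f(2) by blast
    then show "u \<in> V" using Vs0 by simp
  qed
  then show ?thesis by blast
qed

lemma Utop_finest:
  assumes G: "group_topology T" and lim: "limitin T a 0 sequentially" and W: "openin T W"
  shows "Uopen a W"
  unfolding Uopen_def
proof
  fix x assume x: "x \<in> W"
  have "openin T {z. x + z \<in> W}" using gt_translate[OF G W] .
  moreover have "0 \<in> {z. x + z \<in> W}" using x by simp
  ultimately obtain ms where "Uset a ms \<subseteq> {z. x + z \<in> W}" using Uset_inside[OF G lim] by blast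
  then show "\<exists>ms. \<forall>u\<in>Uset a ms. x + u \<in> W" by blast
qed

lemma tau_eq: "tau_seq a = Utop a"
  unfolding tau_seq_def
proof (rule the_equality)
  have "\<forall>T'. group_topology T' \<and> limitin T' a 0 sequentially \<longrightarrow> (\<forall>U. openin T' U \<longrightarrow> openin (Utop a) U)"
  proof (intro allI impI)
    fix T' U assume "group_topology T' \<and> limitin T' a 0 sequentially" "openin T' U"
    then have "Uopen a U" using Utop_finest by blast
    then show "openin (Utop a) U" by (simp add: openin_Utop)
  qed
  then show "group_topology (Utop a) \<and> limitin (Utop a) a 0 sequentially \<and>
    (\<forall>T'. group_topology T' \<and> limitin T' a 0 sequentially \<longrightarrow> (\<forall>U. openin T' U \<longrightarrow> openin (Utop a) U))"
    using Utop_group[of a] Utop_lim[of a] by simp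
next
  fix T assume T: "group_topology T \<and> limitin T a 0 sequentially \<and>
    (\<forall>T'. group_topology T' \<and> limitin T' a 0 sequentially \<longrightarrow> (\<forall>U. openin T' U \<longrightarrow> openin T U))"
  show "T = Utop a" unfolding topology_eq
  proof
    fix S
    show "openin T S = openin (Utop a) S"
    proof
      assume "openin T S"
      then have "Uopen a S" using Utop_finest[of T a S] T by blast
      then show "openin (Utop a) S" by (simp add: openin_Utop)
    next
      assume S: "openin (Utop a) S"
      have "\<forall>U. openin (Utop a) U \<longrightarrow> openin T U"
        using T Utop_group[of a] Utop_lim[of a] by blast
      then show "openin T S" using S by blast
    qed
  qed
qed

definition Rset :: "(nat \<Rightarrow> 'a::ab_group_add) \<Rightarrow> 'a set" where
  "Rset a = insert 0 (range a)"

definition Dset :: "(nat \<Rightarrow> 'a::ab_group_add) \<Rightarrow> 'a set" where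
  "Dset a = set_diff_grp (Rset a) (Rset a)"

primrec Cset :: "(nat \<Rightarrow> 'a::ab_group_add) \<Rightarrow> nat \<Rightarrow> 'a set" where
  "Cset a 0 = {0}"
| "Cset a (Suc k) = set_diff_grp (Cset a k) (Dset a)"

primrec Sseq :: "(nat \<Rightarrow> 'a::ab_group_add) \<Rightarrow> ('a set \<Rightarrow> nat \<Rightarrow> nat) \<Rightarrow> nat \<Rightarrow> 'a set" where
  "Sseq a ch 0 = {0}"
| "Sseq a ch (Suc k) = splus (Sseq a ch k) (Aset a (ch (Sseq a ch k) k))"

lemma Dset_0: "0 \<in> Dset a"
  unfolding Dset_def set_diff_grp_def Rset_def by force

lemma Dset_neg: "x \<in> Dset a \<Longrightarrow> - x \<in> Dset a"
  unfolding Dset_def set_diff_grp_def by force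

lemma Aset_Dset: "e \<in> Aset a m \<Longrightarrow> - e \<in> Dset a"
proof -
  assume "e \<in> Aset a m"
  then consider "e = 0" | n where "e = a n" | n where "e = - a n" unfolding Aset_def by blast
  then show ?thesis
  proof cases
    case 1 then show ?thesis using Dset_0 by simp
  next
    case (2 n)
    have "0 - a n \<in> Dset a" unfolding Dset_def set_diff_grp_def Rset_def by blast
    then show ?thesis using 2 by simp
  next
    case (3 n)
    have "a n - 0 \<in> Dset a" unfolding Dset_def set_diff_grp_def Rset_def by blast
    then show ?thesis using 3 by simp
  qed
qed

lemma Cset_0: "0 \<in> Cset a k"
proof (induction k)
  case 0 then show ?case by simp
next
  case (Suc k)
  have "0 - 0 \<in> set_diff_grp (Cset a k) (Dset a)"
    unfolding set_diff_grp_def using Suc Dset_0 by blast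
  then show ?case by simp
qed

lemma Cset_Suc_mono: "Cset a k \<subseteq> Cset a (Suc k)"
proof
  fix x assume "x \<in> Cset a k"
  then have "x - 0 \<in> set_diff_grp (Cset a k) (Dset a)" unfolding set_diff_grp_def using Dset_0 by blast
  then show "x \<in> Cset a (Suc k)" by simp
qed

lemma Cset_mono: "k \<le> l \<Longrightarrow> Cset a k \<subseteq> Cset a l"
  using lift_Suc_mono_le[of "Cset a", OF Cset_Suc_mono] by blast

lemma Cset_add: "x \<in> Cset a j \<Longrightarrow> y \<in> Cset a l \<Longrightarrow> x + y \<in> Cset a (j + l)"
proof (induction l arbitrary: y)
  case 0 then show ?case by simp
next
  case (Suc l)
  obtain y' d where y': "y' \<in> Cset a l" "d \<in> Dset a" "y = y' - d"
    using Suc.prems(2) unfolding Cset.simps set_diff_grp_def by blast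
  have "x + y' \<in> Cset a (j + l)" using Suc.IH Suc.prems(1) y'(1) by blast
  then have "(x + y') - d \<in> set_diff_grp (Cset a (j + l)) (Dset a)" using y'(2) unfolding set_diff_grp_def by blast
  then have "(x + y') - d \<in> Cset a (Suc (j + l))" by simp
  moreover have "x + y = (x + y') - d" using y'(3) by (simp add: add_diff_eq)
  ultimately show ?case by (metis add_Suc_right)
qed

lemma Cset_neg: "x \<in> Cset a k \<Longrightarrow> - x \<in> Cset a k"
proof (induction k arbitrary: x)
  case 0 then show ?case by simp
next
  case (Suc k)
  obtain x' d where x': "x' \<in> Cset a k" "d \<in> Dset a" "x = x' - d"
    using Suc.prems unfolding Cset.simps set_diff_grp_def by blast
  have "- x' \<in> Cset a k" "- d \<in> Dset a" using Suc.IH x' Dset_neg by auto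
  then have "- x' - (- d) \<in> set_diff_grp (Cset a k) (Dset a)" unfolding set_diff_grp_def by blast
  then have "- x' - (- d) \<in> Cset a (Suc k)" by simp
  moreover have "- x = - x' - (- d)" using x'(3) by simp
  ultimately show ?case by metis
qed

lemma Sseq_Cset: "Sseq a ch k \<subseteq> Cset a k"
proof (induction k)
  case 0 then show ?case by simp
next
  case (Suc k)
  show ?case
  proof
    fix z assume "z \<in> Sseq a ch (Suc k)"
    then obtain x e where xe: "x \<in> Sseq a ch k" "e \<in> Aset a (ch (Sseq a ch k) k)" "z = x + e"
      unfolding Sseq.simps splus_def by blast
    have "x - (- e) \<in> set_diff_grp (Cset a k) (Dset a)" using Suc xe Aset_Dset unfolding set_diff_grp_def by blast
    then have "x - (- e) \<in> Cset a (Suc k)" by simp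
    then show "z \<in> Cset a (Suc k)" using xe(3) by simp
  qed
qed

lemma sum_Sseq: "(\<forall>i. f i \<in> Aset a (ch (Sseq a ch i) i)) \<Longrightarrow> (\<Sum>i<k. f i) \<in> Sseq a ch k"
proof (induction k)
  case 0 then show ?case by simp
next
  case (Suc k)
  have "(\<Sum>i<k. f i) + f k \<in> splus (Sseq a ch k) (Aset a (ch (Sseq a ch k) k))"
    unfolding splus_def using Suc.IH Suc.prems by blast
  then show ?case by simp
qed


lemma Aset_compact:
  assumes G: "group_topology T" and lim: "limitin T a 0 sequentially"
  shows "compactin T (Aset a m)"
proof -
  have neg: "limitin T (\<lambda>n. - a n) 0 sequentially" using gt_neg_lim[OF G lim] .
  have "compactin T (insert 0 (a ` {m..}))"
    using compactin_sequence_with_limit[OF lim, of "a ` {m..}"] gt_topspace[OF G] by auto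
  moreover have "compactin T (insert 0 ((\<lambda>n. - a n) ` {m..}))"
    using compactin_sequence_with_limit[OF neg, of "(\<lambda>n. - a n) ` {m..}"] gt_topspace[OF G] by auto
  ultimately have "compactin T (insert 0 (a ` {m..}) \<union> insert 0 ((\<lambda>n. - a n) ` {m..}))"
    by (rule compactin_Un)
  moreover have "insert 0 (a ` {m..}) \<union> insert 0 ((\<lambda>n. - a n) ` {m..}) = Aset a m"
    unfolding Aset_def by auto
  ultimately show ?thesis by simp
qed

lemma splus_compact:
  assumes G: "group_topology T" and X: "compactin T X" and Y: "compactin T Y"
  shows "compactin T (splus X Y)"
proof (cases "X = {} \<or> Y = {}")
  case True
  then have "splus X Y = {}" unfolding splus_def by auto
  then show ?thesis by simp
next
  case False
  have "compactin (prod_topology T T) (X \<times> Y)" using X Y by (simp add: compactin_Times)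
  moreover have "continuous_map (prod_topology T T) T (\<lambda>(x, y). x + y)" using G unfolding group_topology_def by blast
  ultimately have "compactin T ((\<lambda>(x, y). x + y) ` (X \<times> Y))" by (rule image_compactin)
  moreover have "(\<lambda>(x, y). x + y) ` (X \<times> Y) = splus X Y" unfolding splus_def by auto
  ultimately show ?thesis by simp
qed

lemma Sseq_closed:
  assumes G: "group_topology T" and H: "Hausdorff_space T" and lim: "limitin T a 0 sequentially"
  shows "closedin T (Sseq a ch k)"
proof -
  have "compactin T (Sseq a ch k)"
  proof (induction k)
    case 0 then show ?case using gt_topspace[OF G] by simp
  next
    case (Suc k)
    then show ?case using splus_compact[OF G] Aset_compact[OF G lim] by simp
  qed
  then show ?thesis using compactin_imp_closedin[OF H] by blast
qed

lemma avoid_one: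
  assumes G: "group_topology T" and lim: "limitin T a 0 sequentially"
    and S: "closedin T S" and y: "y \<notin> S"
  shows "\<exists>m. y \<notin> splus S (Aset a m)"
proof (rule ccontr)
  assume "\<not> ?thesis"
  then have yin: "\<forall>m. y \<in> splus S (Aset a m)" by blast
  have "\<forall>m. \<exists>p. fst p \<in> S \<and> snd p \<in> Aset a m \<and> y = fst p + snd p"
  proof
    fix m
    obtain x e where "x \<in> S" "e \<in> Aset a m" "y = x + e" using yin unfolding splus_def by blast
    then show "\<exists>p. fst p \<in> S \<and> snd p \<in> Aset a m \<and> y = fst p + snd p"
      by (intro exI[of _ "(x, e)"]) simp
  qed
  then obtain p where p: "\<And>m. fst (p m) \<in> S \<and> snd (p m) \<in> Aset a m \<and> y = fst (p m) + snd (p m)"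
    by metis
  define e where "e = (\<lambda>m. snd (p m))"
  define s where "s = (\<lambda>m. fst (p m))"
  have neg: "limitin T (\<lambda>n. - a n) 0 sequentially" using gt_neg_lim[OF G lim] .
  have elim: "limitin T e 0 sequentially"
    unfolding limitin_sequentially
  proof (intro conjI allI impI)
    show "0 \<in> topspace T" using gt_topspace[OF G] by simp
    fix U assume U: "openin T U \<and> 0 \<in> U"
    obtain N1 where N1: "\<forall>n\<ge>N1. a n \<in> U" using lim U unfolding limitin_sequentially by blast
    obtain N2 where N2: "\<forall>n\<ge>N2. - a n \<in> U" using neg U unfolding limitin_sequentially by blast
    have "\<forall>m\<ge>max N1 N2. e m \<in> U"
    proof (intro allI impI)
      fix m assume m: "max N1 N2 \<le> m"
      have "e m \<in> Aset a m" using p e_def by blast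
      then show "e m \<in> U" unfolding Aset_def using U N1 N2 m by auto
    qed
    then show "\<exists>N. \<forall>n\<ge>N. e n \<in> U" by blast
  qed
  have c1: "continuous_map T (prod_topology T T) (\<lambda>z. (y, - z))"
    unfolding continuous_map_pairwise
  proof
    show "continuous_map T T (fst \<circ> (\<lambda>z. (y, - z)))" using gt_topspace[OF G] by (simp add: comp_def)
    have "continuous_map T T uminus" using G unfolding group_topology_def by blast
    then show "continuous_map T T (snd \<circ> (\<lambda>z. (y, - z)))" by (simp add: comp_def)
  qed
  have "continuous_map (prod_topology T T) T (\<lambda>(x, y). x + y)" using G unfolding group_topology_def by blast
  with c1 have "continuous_map T T ((\<lambda>(x, y). x + y) \<circ> (\<lambda>z. (y, - z)))" by (rule continuous_map_compose)
  then have "continuous_map T T (\<lambda>z. y + - z)" by (simp add: comp_def)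
  from continuous_map_limit[OF this elim] have "limitin T ((\<lambda>z. y + - z) \<circ> e) (y + - 0) sequentially" .
  moreover have "(\<lambda>z. y + - z) \<circ> e = s"
  proof
    fix m show "((\<lambda>z. y + - z) \<circ> e) m = s m" using p[of m] unfolding e_def s_def by (simp add: algebra_simps)
  qed
  ultimately have "limitin T s y sequentially" by simp
  moreover have "eventually (\<lambda>m. s m \<in> S) sequentially" using p unfolding s_def by simp
  ultimately have "y \<in> S" using limitin_closedin[OF _ S] by (metis trivial_limit_sequentially)
  then show False using y by simp
qed

lemma avoid_many:
  assumes G: "group_topology T" and lim: "limitin T a 0 sequentially"
    and S: "closedin T S" and y: "\<forall>j\<le>(k::nat). y j \<notin> S"
  shows "\<exists>m. \<forall>j\<le>k. y j \<notin> splus S (Aset a m)"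
proof -
  have "\<forall>j. \<exists>m. j \<le> k \<longrightarrow> y j \<notin> splus S (Aset a m)" using avoid_one[OF G lim S] y by blast
  then obtain mm where mm: "\<And>j. j \<le> k \<Longrightarrow> y j \<notin> splus S (Aset a (mm j))" by metis
  define M where "M = (\<Sum>j\<le>k. mm j)"
  have "\<forall>j\<le>k. y j \<notin> splus S (Aset a M)"
  proof (intro allI impI)
    fix j assume j: "j \<le> k"
    have "mm j \<le> M" unfolding M_def using j by (intro member_le_sum) auto
    then have "Aset a M \<subseteq> Aset a (mm j)" by (rule Aset_mono)
    then have "splus S (Aset a M) \<subseteq> splus S (Aset a (mm j))" unfolding splus_def by blast
    then show "y j \<notin> splus S (Aset a M)" using mm j by blast
  qed
  then show ?thesis by blast
qed

lemma bounded_conv: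
  fixes y :: "nat \<Rightarrow> 'a::ab_group_add"
  assumes G: "group_topology T" and H: "Hausdorff_space T" and lim: "limitin T a 0 sequentially"
    and y: "\<forall>ms. \<exists>N. \<forall>n\<ge>N. y n \<in> Uset a ms"
  shows "\<exists>k N. \<forall>n\<ge>N. y n \<in> Cset a k"
proof (rule ccontr)
  assume "\<not> ?thesis"
  then have nb: "\<forall>k N. \<exists>n\<ge>N. y n \<notin> Cset a k" by (meson not_le)
  define nn where "nn = rec_nat (SOME n. y n \<notin> Cset a 0) (\<lambda>j p. SOME n. n \<ge> Suc p \<and> y n \<notin> Cset a (Suc j))"
  have nn0: "y (nn 0) \<notin> Cset a 0"
  proof -
    have "\<exists>n. y n \<notin> Cset a 0" using nb by blast
    then have "y (SOME n. y n \<notin> Cset a 0) \<notin> Cset a 0" by (rule someI_ex)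
    then show ?thesis by (simp add: nn_def)
  qed
  have nnS: "nn (Suc j) \<ge> Suc (nn j) \<and> y (nn (Suc j)) \<notin> Cset a (Suc j)" for j
  proof -
    have "\<exists>n. n \<ge> Suc (nn j) \<and> y n \<notin> Cset a (Suc j)" using nb by blast
    then have "(SOME n. n \<ge> Suc (nn j) \<and> y n \<notin> Cset a (Suc j)) \<ge> Suc (nn j) \<and>
       y (SOME n. n \<ge> Suc (nn j) \<and> y n \<notin> Cset a (Suc j)) \<notin> Cset a (Suc j)" by (rule someI_ex)
    then show ?thesis by (simp add: nn_def)
  qed
  have nnC: "y (nn j) \<notin> Cset a j" for j
    using nn0 nnS by (cases j) auto
  have nnge: "nn j \<ge> j" for j
  proof (induction j)
    case 0 then show ?case by simp
  next
    case (Suc j) then show ?case using nnS[of j] by simp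
  qed
  define ch where "ch = (\<lambda>S k. SOME m. \<forall>j\<le>k. y (nn j) \<notin> splus S (Aset a m))"
  have inv: "\<forall>j<k. y (nn j) \<notin> Sseq a ch k" for k
  proof (induction k)
    case 0 then show ?case by simp
  next
    case (Suc k)
    have pre: "\<forall>j\<le>k. y (nn j) \<notin> Sseq a ch k"
    proof (intro allI impI)
      fix j assume j: "j \<le> k"
      show "y (nn j) \<notin> Sseq a ch k"
      proof (cases "j < k")
        case True then show ?thesis using Suc.IH by blast
      next
        case False
        then have "j = k" using j by simp
        then show ?thesis using nnC[of k] Sseq_Cset[of a ch k] by blast
      qed
    qed
    have "\<exists>m. \<forall>j\<le>k. (\<lambda>j. y (nn j)) j \<notin> splus (Sseq a ch k) (Aset a m)"
      using avoid_many[where y="\<lambda>j. y (nn j)" and k=k, OF G lim Sseq_closed[OF G H lim, of ch k]] pre by simp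
    then have "\<forall>j\<le>k. y (nn j) \<notin> splus (Sseq a ch k) (Aset a (ch (Sseq a ch k) k))"
      unfolding ch_def by (rule someI_ex)
    then show ?case by (simp add: less_Suc_eq_le)
  qed
  define ms where "ms = (\<lambda>i. ch (Sseq a ch i) i)"
  obtain N where N: "\<forall>n\<ge>N. y n \<in> Uset a ms" using y by blast
  have "y (nn N) \<in> Uset a ms" using N nnge[of N] by blast
  then obtain k f where f: "\<forall>i. f i \<in> Aset a (ms i)" "y (nn N) = (\<Sum>i<k. f i)" unfolding Uset_def by blast
  have "y (nn N) \<in> Sseq a ch k" using sum_Sseq[of f a ch k] f unfolding ms_def by simp
  show False
  proof (cases "k \<le> N")
    case True
    then have "y (nn N) \<in> Cset a N" using \<open>y (nn N) \<in> Sseq a ch k\<close> Sseq_Cset[of a ch k] Cset_mono[of k N a] by blast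
    then show False using nnC by blast
  next
    case False
    then show False using inv[of k] \<open>y (nn N) \<in> Sseq a ch k\<close> by simp
  qed
qed

lemma countable_group_ideal: "group_ideal {A::'a::ab_group_add set. countable A}"
  unfolding group_ideal_def
proof (intro conjI allI impI)
  fix F :: "'a set" assume "finite F" then show "F \<in> {A. countable A}" by (simp add: countable_finite)
next
  fix A B :: "'a set" assume "A \<in> {A. countable A} \<and> B \<subseteq> A"
  then show "B \<in> {A. countable A}" using countable_subset by blast
next
  fix A B :: "'a set" assume AB: "A \<in> {A. countable A} \<and> B \<in> {A. countable A}"
  have "set_diff_grp A B = (\<lambda>(x, y). x - y) ` (A \<times> B)" unfolding set_diff_grp_def by auto
  moreover have "countable (A \<times> B)" using AB by simp
  ultimately show "set_diff_grp A B \<in> {A. countable A}" by simp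
qed

lemma S_ideal_countable: "A \<in> S_ideal T \<Longrightarrow> countable A"
proof -
  assume A: "A \<in> S_ideal T"
  have "{A. countable A} \<in> {I. group_ideal I \<and>
      (\<forall>x xs. limitin T xs x sequentially \<longrightarrow> insert x (range xs) \<in> I)}"
    using countable_group_ideal by simp
  then show ?thesis using A unfolding S_ideal_def by blast
qed

lemma S_ideal_finite: "finite F \<Longrightarrow> F \<in> S_ideal T"
  unfolding S_ideal_def
proof (rule InterI)
  fix I assume "finite F" "I \<in> {I. group_ideal I \<and>
      (\<forall>x xs. limitin T xs x sequentially \<longrightarrow> insert x (range xs) \<in> I)}"
  then have "\<forall>F. finite F \<longrightarrow> F \<in> I" unfolding group_ideal_def by blast
  then show "F \<in> I" using \<open>finite F\<close> by blast
qed

lemma metrizable_imp_countable: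
  fixes T :: "'a::ab_group_add topology"
  assumes M: "coarse_metrizable (ideal_coarse_structure (S_ideal T))"
  shows "countable (UNIV :: 'a::ab_group_add set)"
proof -
  have "\<exists>B. countable B \<and> B \<subseteq> ideal_coarse_structure (S_ideal T) \<and>
      (\<forall>E\<in>ideal_coarse_structure (S_ideal T). \<exists>F\<in>B. E \<subseteq> F)"
    using M unfolding coarse_metrizable_def .
  then obtain B where B: "countable B \<and> B \<subseteq> ideal_coarse_structure (S_ideal T) \<and>
      (\<forall>E\<in>ideal_coarse_structure (S_ideal T). \<exists>F\<in>B. E \<subseteq> F)" ..
  have B1: "countable B" using B by (rule conjunct1)
  have B2: "B \<subseteq> ideal_coarse_structure (S_ideal T)" using B[THEN conjunct2, THEN conjunct1] .
  have B3: "\<forall>E\<in>ideal_coarse_structure (S_ideal T). \<exists>F\<in>B. E \<subseteq> F" using B[THEN conjunct2, THEN conjunct2] .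
  define g where "g = (\<lambda>F. SOME A. A \<in> S_ideal T \<and> F \<subseteq> ideal_entourage A)"
  have g: "g F \<in> S_ideal T \<and> F \<subseteq> ideal_entourage (g F)" if "F \<in> B" for F
  proof -
    have "F \<in> ideal_coarse_structure (S_ideal T)" using B2 that by (rule subsetD)
    then have "\<exists>A. A \<in> S_ideal T \<and> F \<subseteq> ideal_entourage A"
      unfolding ideal_coarse_structure_def by blast
    then show ?thesis unfolding g_def by (rule someI_ex)
  qed
  have "UNIV \<subseteq> (\<Union>F\<in>B. g F)"
  proof
    fix x :: 'a
    have "{x} \<in> S_ideal T" by (rule S_ideal_finite) simp
    then have "ideal_entourage {x} \<in> ideal_coarse_structure (S_ideal T)"
      unfolding ideal_coarse_structure_def by (intro CollectI bexI[of _ "{x}"]) auto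
    with B3 have "\<exists>F\<in>B. ideal_entourage {x} \<subseteq> F" by (rule bspec)
    then obtain F where F1: "F \<in> B" and F2: "ideal_entourage {x} \<subseteq> F" ..
    have "(x, 0) \<in> ideal_entourage {x}" unfolding ideal_entourage_def by simp
    moreover have "F \<subseteq> ideal_entourage (g F)" using g[OF F1] by (rule conjunct2)
    then have "ideal_entourage {x} \<subseteq> ideal_entourage (g F)" using F2 by (rule subset_trans[rotated])
    ultimately have "(x, 0) \<in> ideal_entourage (g F)" by (rule subsetD[rotated])
    then have "x \<in> (\<lambda>a. a + 0) ` g F" unfolding ideal_entourage_def by simp
    then have "x \<in> g F" by simp
    then show "x \<in> (\<Union>F\<in>B. g F)" using F1 by (rule UN_I[rotated])
  qed
  moreover have "countable (\<Union>F\<in>B. g F)"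
  proof (rule countable_UN[OF B1])
    fix F assume "F \<in> B"
    then have "g F \<in> S_ideal T" using g by blast
    then show "countable (g F)" by (rule S_ideal_countable)
  qed
  ultimately show ?thesis by (rule countable_subset)
qed

definition Jfam :: "(nat \<Rightarrow> 'a::ab_group_add) \<Rightarrow> 'a set set" where
  "Jfam a = {A. \<exists>F k. finite F \<and> A \<subseteq> set_diff_grp F (Cset a k)}"

lemma finite_set_diff_grp: "finite F1 \<Longrightarrow> finite F2 \<Longrightarrow> finite (set_diff_grp F1 F2)"
proof -
  assume "finite F1" "finite F2"
  then have "finite ((\<lambda>(x, y). x - y) ` (F1 \<times> F2))" by simp
  moreover have "set_diff_grp F1 F2 = (\<lambda>(x, y). x - y) ` (F1 \<times> F2)" unfolding set_diff_grp_def by auto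
  ultimately show ?thesis by simp
qed

lemma Jfam_ideal: "group_ideal (Jfam a)"
  unfolding group_ideal_def
proof (intro conjI allI impI)
  fix G :: "'a set" assume G: "finite G"
  have "G \<subseteq> set_diff_grp G (Cset a 0)"
  proof
    fix g assume "g \<in> G"
    then have "g - 0 \<in> set_diff_grp G (Cset a 0)" unfolding set_diff_grp_def by auto
    then show "g \<in> set_diff_grp G (Cset a 0)" by simp
  qed
  then show "G \<in> Jfam a" unfolding Jfam_def using G by blast
next
  fix A B :: "'a set" assume "A \<in> Jfam a \<and> B \<subseteq> A"
  then show "B \<in> Jfam a" unfolding Jfam_def by blast
next
  fix A B :: "'a set" assume AB: "A \<in> Jfam a \<and> B \<in> Jfam a"
  then obtain F1 k1 where 1: "finite F1" "A \<subseteq> set_diff_grp F1 (Cset a k1)" unfolding Jfam_def by blast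
  from AB obtain F2 k2 where 2: "finite F2" "B \<subseteq> set_diff_grp F2 (Cset a k2)" unfolding Jfam_def by blast
  have "set_diff_grp A B \<subseteq> set_diff_grp (set_diff_grp F1 F2) (Cset a (k1 + k2))"
  proof
    fix z assume "z \<in> set_diff_grp A B"
    then obtain p q where pq: "p \<in> A" "q \<in> B" "z = p - q" unfolding set_diff_grp_def by blast
    obtain f1 c1 where p: "f1 \<in> F1" "c1 \<in> Cset a k1" "p = f1 - c1" using 1(2) pq(1) unfolding set_diff_grp_def by blast
    obtain f2 c2 where q: "f2 \<in> F2" "c2 \<in> Cset a k2" "q = f2 - c2" using 2(2) pq(2) unfolding set_diff_grp_def by blast
    have c: "c1 + - c2 \<in> Cset a (k1 + k2)" using Cset_add[OF p(2) Cset_neg[OF q(2)]] .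
    have f: "f1 - f2 \<in> set_diff_grp F1 F2" using p(1) q(1) unfolding set_diff_grp_def by blast
    have "z = (f1 - f2) - (c1 + - c2)" using pq(3) p(3) q(3) by (simp add: algebra_simps)
    then show "z \<in> set_diff_grp (set_diff_grp F1 F2) (Cset a (k1 + k2))"
      using c f unfolding set_diff_grp_def by blast
  qed
  moreover have "finite (set_diff_grp F1 F2)" using 1(1) 2(1) by (rule finite_set_diff_grp)
  ultimately show "set_diff_grp A B \<in> Jfam a" unfolding Jfam_def by blast
qed

lemma conv_in_J:
  fixes a :: "nat \<Rightarrow> 'a::ab_group_add"
  assumes G: "group_topology T" and H: "Hausdorff_space T" and lim: "limitin T a 0 sequentially"
    and conv: "limitin (Utop a) xs x sequentially"
  shows "insert x (range xs) \<in> Jfam a"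
proof -
  have y: "\<forall>ms. \<exists>N. \<forall>n\<ge>N. xs n + - x \<in> Uset a ms"
  proof
    fix ms
    obtain Ob where Ob: "Uopen a Ob" "0 \<in> Ob" "Ob \<subseteq> Uset a ms" using Uset_nhd by blast
    have "openin (Utop a) {z. z + - x \<in> Ob}" unfolding openin_Utop by (rule Uopen_translate[OF Ob(1)])
    moreover have "x \<in> {z. z + - x \<in> Ob}" using Ob(2) by simp
    ultimately obtain N where "\<forall>n\<ge>N. xs n \<in> {z. z + - x \<in> Ob}" using conv unfolding limitin_sequentially by blast
    then show "\<exists>N. \<forall>n\<ge>N. xs n + - x \<in> Uset a ms" using Ob(3) by blast
  qed
  obtain k N where kN: "\<forall>n\<ge>N. xs n + - x \<in> Cset a k" using bounded_conv[OF G H lim y] by blast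
  define F where "F = insert x (xs ` {..<N})"
  have "insert x (range xs) \<subseteq> set_diff_grp F (Cset a k)"
  proof
    fix z assume z: "z \<in> insert x (range xs)"
    show "z \<in> set_diff_grp F (Cset a k)"
    proof (cases "z \<in> F")
      case True
      then have "z - 0 \<in> set_diff_grp F (Cset a k)" using Cset_0 unfolding set_diff_grp_def by blast
      then show ?thesis by simp
    next
      case False
      then have zx: "z \<noteq> x" and zN: "z \<notin> xs ` {..<N}" unfolding F_def by auto
      obtain n where n1: "z = xs n" using z zx by blast
      have "\<not> n < N" using zN n1 by blast
      then have n: "z = xs n" "n \<ge> N" using n1 by auto
      have "- (xs n + - x) \<in> Cset a k" using kN n(2) Cset_neg by blast
      moreover have "x \<in> F" unfolding F_def by simp
      ultimately have "x - (- (xs n + - x)) \<in> set_diff_grp F (Cset a k)" unfolding set_diff_grp_def by blast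
      then show ?thesis using n(1) by simp
    qed
  qed
  moreover have "finite F" unfolding F_def by simp
  ultimately show ?thesis unfolding Jfam_def by blast
qed

lemma S_sub_J:
  fixes a :: "nat \<Rightarrow> 'a::ab_group_add"
  assumes G: "group_topology T" and H: "Hausdorff_space T" and lim: "limitin T a 0 sequentially"
  shows "S_ideal (Utop a) \<subseteq> Jfam a"
proof -
  have "Jfam a \<in> {I. group_ideal I \<and>
      (\<forall>x xs. limitin (Utop a) xs x sequentially \<longrightarrow> insert x (range xs) \<in> I)}"
    using Jfam_ideal conv_in_J[OF G H lim] by blast
  then show ?thesis unfolding S_ideal_def by (rule Inter_lower)
qed

lemma block_in_S:
  fixes a :: "nat \<Rightarrow> 'a::ab_group_add"
  assumes F: "finite F"
  shows "set_diff_grp F (Cset a k) \<in> S_ideal (Utop a)"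
  unfolding S_ideal_def
proof (rule InterI)
  fix I assume I: "I \<in> {I. group_ideal I \<and>
      (\<forall>x xs. limitin (Utop a) xs x sequentially \<longrightarrow> insert x (range xs) \<in> I)}"
  have fin: "\<forall>F. finite F \<longrightarrow> F \<in> I" using I unfolding group_ideal_def by blast
  have dif: "\<forall>A B. A \<in> I \<and> B \<in> I \<longrightarrow> set_diff_grp A B \<in> I" using I unfolding group_ideal_def by blast
  have gen: "\<forall>x xs. limitin (Utop a) xs x sequentially \<longrightarrow> insert x (range xs) \<in> I" using I by blast
  have R: "Rset a \<in> I" unfolding Rset_def using gen Utop_lim[of a] by blast
  have D: "Dset a \<in> I" unfolding Dset_def using dif R by blast
  have C: "Cset a j \<in> I" for j
  proof (induction j)
    case 0 then show ?case using fin by simp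
  next
    case (Suc j) then show ?case using dif D by simp
  qed
  show "set_diff_grp F (Cset a k) \<in> I" using dif fin F C by blast
qed

lemma ideal_entourage_mono: "A \<subseteq> B \<Longrightarrow> ideal_entourage A \<subseteq> ideal_entourage B"
  unfolding ideal_entourage_def by blast

lemma countable_imp_metrizable:
  fixes a :: "nat \<Rightarrow> 'a::ab_group_add"
  assumes G: "group_topology T" and H: "Hausdorff_space T" and lim: "limitin T a 0 sequentially"
    and C: "countable (UNIV :: 'a set)"
  shows "coarse_metrizable (ideal_coarse_structure (S_ideal (Utop a)))"
  unfolding coarse_metrizable_def
proof (intro exI conjI)
  let ?B = "(\<lambda>p. ideal_entourage (set_diff_grp (fst p) (Cset a (snd p)))) ` ({F. finite F} \<times> (UNIV :: nat set))"
  have "countable {A. finite A \<and> A \<subseteq> (UNIV :: 'a set)}" using countable_Collect_finite_subset[OF C] .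
  then have "countable {F :: 'a set. finite F}" by simp
  then have "countable ({F :: 'a set. finite F} \<times> (UNIV :: nat set))" by simp
  then show "countable ?B" by simp
  show "?B \<subseteq> ideal_coarse_structure (S_ideal (Utop a))"
  proof
    fix E assume "E \<in> ?B"
    then obtain F k where Fk: "finite F" "E = ideal_entourage (set_diff_grp F (Cset a k))" by auto
    have "set_diff_grp F (Cset a k) \<in> S_ideal (Utop a)" using block_in_S[OF Fk(1)] .
    then show "E \<in> ideal_coarse_structure (S_ideal (Utop a))"
      unfolding ideal_coarse_structure_def using Fk(2) by blast
  qed
  show "\<forall>E\<in>ideal_coarse_structure (S_ideal (Utop a)). \<exists>F\<in>?B. E \<subseteq> F"
  proof
    fix E assume "E \<in> ideal_coarse_structure (S_ideal (Utop a))"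
    then obtain A where A: "A \<in> S_ideal (Utop a)" "E \<subseteq> ideal_entourage A"
      unfolding ideal_coarse_structure_def by blast
    have "A \<in> Jfam a" using A(1) S_sub_J[OF G H lim] by blast
    then obtain F k where Fk: "finite F" "A \<subseteq> set_diff_grp F (Cset a k)" unfolding Jfam_def by blast
    have "E \<subseteq> ideal_entourage (set_diff_grp F (Cset a k))"
      using A(2) ideal_entourage_mono[OF Fk(2)] by (rule subset_trans)
    moreover have "ideal_entourage (set_diff_grp F (Cset a k)) \<in> ?B" using Fk(1) by force
    ultimately show "\<exists>F\<in>?B. E \<subseteq> F" by blast
  qed
qed

theorem theorem7:
  fixes a :: "nat \<Rightarrow> 'a::ab_group_add"
  assumes "infinite (UNIV :: 'a set)"
    and "T_sequence a"
  shows "coarse_metrizable (ideal_coarse_structure (S_ideal (tau_seq a)))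
           \<longleftrightarrow> countable (UNIV :: 'a set)"
proof -
  obtain T where T: "group_topology T" "Hausdorff_space T" "limitin T a 0 sequentially"
    using assms(2) unfolding T_sequence_def by blast
  show ?thesis unfolding tau_eq
  proof
    assume "coarse_metrizable (ideal_coarse_structure (S_ideal (Utop a)))"
    then show "countable (UNIV :: 'a set)" by (rule metrizable_imp_countable)
  next
    assume "countable (UNIV :: 'a set)"
    then show "coarse_metrizable (ideal_coarse_structure (S_ideal (Utop a)))"
      by (rule countable_imp_metrizable[OF T])
  qed
qed

end
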